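(* Consider a convex compact visibility representation of a graph $G$, and let $A$ and $B$ be two of its regions that are mutually visible (so $AB$ is an edge of $G$). If some region other than $A$ and $B$ intersects some line segment joining a point of $A$ to a point of $B$, then the edge $AB$ lies in a triangle ($K_3$) of $G$.
   Context: All graphs are finite and simple. Given a family of pairwise disjoint nonempty connected subsets ("regions") of $\mathbb{R}^2$, a sightline is a closed line segment $\overline{ab}$ with $a\in A$, $b\in B$ for two different regions $A\neq B$ of the family, such that the segment intersects no region of the family other than $A$ and $B$; two regions are mutually visible if there is a sightline between them. A visibility representation of a graph $G$ is such a family with one region per vertex, such that two distinct vertices are adjacent in $G$ if and only if their regions are mutually visible. A convex compact visibility representation is one in which every region is compact and convex. Vertices are identified with their regions. *)

theory Defs
  imports "HOL-Analysis.Analysis"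
begin

definition sightline ::
  "'v set \<Rightarrow> ('v \<Rightarrow> (real \<times> real) set) \<Rightarrow> 'v \<Rightarrow> 'v \<Rightarrow> real \<times> real \<Rightarrow> real \<times> real \<Rightarrow> bool" where
  "sightline V R u v a b \<longleftrightarrow>
     u \<in> V \<and> v \<in> V \<and> u \<noteq> v \<and> a \<in> R u \<and> b \<in> R v \<and>
     (\<forall>w\<in>V. w \<noteq> u \<and> w \<noteq> v \<longrightarrow> closed_segment a b \<inter> R w = {})"

definition mutually_visible ::
  "'v set \<Rightarrow> ('v \<Rightarrow> (real \<times> real) set) \<Rightarrow> 'v \<Rightarrow> 'v \<Rightarrow> bool" where
  "mutually_visible V R u v \<longleftrightarrow> (\<exists>a b. sightline V R u v a b)"

definition simple_graph :: "'v set \<Rightarrow> ('v \<Rightarrow> 'v \<Rightarrow> bool) \<Rightarrow> bool" where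
  "simple_graph V E \<longleftrightarrow> finite V \<and>
     (\<forall>u v. E u v \<longrightarrow> u \<in> V \<and> v \<in> V) \<and>
     (\<forall>u v. E u v \<longrightarrow> E v u) \<and> (\<forall>u. \<not> E u u)"

definition visibility_representation ::
  "'v set \<Rightarrow> ('v \<Rightarrow> 'v \<Rightarrow> bool) \<Rightarrow> ('v \<Rightarrow> (real \<times> real) set) \<Rightarrow> bool" where
  "visibility_representation V E R \<longleftrightarrow>
     (\<forall>v\<in>V. R v \<noteq> {} \<and> connected (R v)) \<and>
     (\<forall>u\<in>V. \<forall>v\<in>V. u \<noteq> v \<longrightarrow> R u \<inter> R v = {}) \<and>
     (\<forall>u\<in>V. \<forall>v\<in>V. u \<noteq> v \<longrightarrow> (E u v \<longleftrightarrow> mutually_visible V R u v))"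

definition convex_compact_visibility_representation ::
  "'v set \<Rightarrow> ('v \<Rightarrow> 'v \<Rightarrow> bool) \<Rightarrow> ('v \<Rightarrow> (real \<times> real) set) \<Rightarrow> bool" where
  "convex_compact_visibility_representation V E R \<longleftrightarrow>
     visibility_representation V E R \<and> (\<forall>v\<in>V. compact (R v) \<and> convex (R v))"

end

theory Submission
  imports Defs
begin

lemma seg_aff:
  fixes x z :: "'a::real_vector"
  assumes "a \<le> \<sigma>" "\<sigma> \<le> b"
  shows "(1-\<sigma>)*\<^sub>R x + \<sigma> *\<^sub>R z \<in> closed_segment ((1-a)*\<^sub>R x + a*\<^sub>R z) ((1-b)*\<^sub>R x + b*\<^sub>R z)"
proof (cases "a = b")
  case True
  then have "\<sigma> = a" using assms by auto
  then show ?thesis using True by simp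
next
  case False
  then have ab: "a < b" using assms by auto
  define \<mu> where "\<mu> = (\<sigma> - a) / (b - a)"
  have m0: "0 \<le> \<mu>" "\<mu> \<le> 1" using assms ab by (auto simp: \<mu>_def field_simps)
  have c1: "\<mu> * (b - a) = \<sigma> - a" using ab by (simp add: \<mu>_def)
  have c: "(1 - \<mu>) * a + \<mu> * b = \<sigma>" using c1 by (simp add: algebra_simps)
  have "(1 - \<mu>) *\<^sub>R ((1-a)*\<^sub>R x + a*\<^sub>R z) + \<mu> *\<^sub>R ((1-b)*\<^sub>R x + b*\<^sub>R z)
      = (1 - ((1 - \<mu>) * a + \<mu> * b)) *\<^sub>R x + ((1 - \<mu>) * a + \<mu> * b) *\<^sub>R z"
    by (simp add: algebra_simps)
  also have "\<dots> = (1-\<sigma>)*\<^sub>R x + \<sigma> *\<^sub>R z" by (simp add: c)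
  finally have e: "(1-\<sigma>)*\<^sub>R x + \<sigma> *\<^sub>R z = (1 - \<mu>) *\<^sub>R ((1-a)*\<^sub>R x + a*\<^sub>R z) + \<mu> *\<^sub>R ((1-b)*\<^sub>R x + b*\<^sub>R z)" by simp
  show ?thesis unfolding closed_segment_def
    by (rule CollectI, rule exI[of _ \<mu>]) (use m0 e in auto)
qed

lemma core:
  fixes V :: "'v set" and R :: "'v \<Rightarrow> (real \<times> real) set"
  assumes fin: "finite V"
    and disj: "\<forall>p\<in>V. \<forall>q\<in>V. p \<noteq> q \<longrightarrow> R p \<inter> R q = {}"
    and cc: "\<forall>p\<in>V. compact (R p) \<and> convex (R p)"
    and uV: "u \<in> V" and vV: "v \<in> V" and uv: "u \<noteq> v"
    and xA: "x \<in> R u" and y0B: "y0 \<in> R v" and y1B: "y1 \<in> R v"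
    and clear: "\<forall>w\<in>V. w \<noteq> u \<and> w \<noteq> v \<longrightarrow> closed_segment x y0 \<inter> R w = {}"
    and w0: "w0 \<in> V" "w0 \<noteq> u" "w0 \<noteq> v" and hit: "closed_segment x y1 \<inter> R w0 \<noteq> {}"
  shows "\<exists>c\<in>V. c \<noteq> u \<and> c \<noteq> v \<and> mutually_visible V R u c \<and> mutually_visible V R c v"
proof -
  define Ob where "Ob = (\<Union>w\<in>V - {u,v}. R w)"
  have closedO: "closed Ob" unfolding Ob_def
    using fin cc by (intro closed_UN) (auto intro: compact_imp_closed)
  define y where "y t = (1-t) *\<^sub>R y0 + t *\<^sub>R y1" for t :: real
  define \<phi> where "\<phi> s t = (1-s) *\<^sub>R x + s *\<^sub>R y t" for s t :: real
  have phi_exp: "\<phi> s t = (1-s) *\<^sub>R x + (s - s*t) *\<^sub>R y0 + (s*t) *\<^sub>R y1" for s t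
    unfolding \<phi>_def y_def by (simp add: algebra_simps)
  define P where "P = ({0..1::real} \<times> {0..1::real}) \<inter> (\<lambda>p. \<phi> (fst p) (snd p)) -` Ob"
  have contphi: "continuous_on UNIV (\<lambda>p. \<phi> (fst p) (snd p))"
    unfolding \<phi>_def y_def by (intro continuous_intros)
  have compP: "compact P" unfolding P_def
    by (intro compact_Int_closed compact_Times compact_Icc closed_vimage closedO contphi)
  have convR: "convex (R p)" if "p \<in> V" for p using cc that by auto
  have yB: "y t \<in> R v" if "0 \<le> t" "t \<le> 1" for t
  proof -
    have "y t \<in> closed_segment y0 y1" unfolding y_def closed_segment_def using that by blast
    then show ?thesis using convex_contains_segment convR[OF vV] y0B y1B by blast
  qed
  have y01: "y 0 = y0" "y 1 = y1" unfolding y_def by auto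
  have phi0: "\<phi> 0 t = x" for t unfolding \<phi>_def by simp
  have phi1: "\<phi> 1 t = y t" for t unfolding \<phi>_def by simp
  have phiseg: "\<phi> s t \<in> closed_segment x (y t)" if "0 \<le> s" "s \<le> 1" for s t
    unfolding \<phi>_def closed_segment_def using that by blast
  have notOb_u: "p \<notin> Ob" if "p \<in> R u" for p
    using that disj uV unfolding Ob_def by blast
  have notO_v: "p \<notin> Ob" if "p \<in> R v" for p
    using that disj vV unfolding Ob_def by blast
  have Pne: "P \<noteq> {}"
  proof -
    obtain q where q: "q \<in> closed_segment x y1" "q \<in> R w0" using hit by blast
    then obtain s where s: "0 \<le> s" "s \<le> 1" "q = (1-s) *\<^sub>R x + s *\<^sub>R y1"
      unfolding closed_segment_def by blast
    have "q = \<phi> s 1" using s unfolding \<phi>_def y_def by simp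
    moreover have "q \<in> Ob" using q w0 unfolding Ob_def by blast
    ultimately have "(s,1) \<in> P" using s unfolding P_def by auto
    then show ?thesis by blast
  qed
  have "compact (snd ` P)" using compP by (intro compact_continuous_image continuous_intros)
  moreover have "snd ` P \<noteq> {}" using Pne by simp
  ultimately obtain t0 where t0: "t0 \<in> snd ` P" "\<forall>t\<in>snd ` P. t0 \<le> t"
    using compact_attains_inf[of "snd ` P"] by blast
  define Q where "Q = fst ` (P \<inter> snd -` {t0})"
  have compQ: "compact Q" unfolding Q_def
    by (intro compact_continuous_image continuous_intros compact_Int_closed compP closed_vimage_snd closed_singleton)
  have Qne: "Q \<noteq> {}" using t0(1) unfolding Q_def by force
  obtain s0 where s0: "s0 \<in> Q" "\<forall>s\<in>Q. s0 \<le> s"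
    using compact_attains_inf[OF compQ Qne] by blast
  have s0t0: "(s0,t0) \<in> P" using s0(1) unfolding Q_def by force
  have tmin: "t0 \<le> t" if "(s,t) \<in> P" for s t using t0(2) that by force
  have smin: "s0 \<le> s" if "(s,t0) \<in> P" for s using s0(2) that unfolding Q_def by force
  have inP: "(s,t) \<in> P" if "0 \<le> s" "s \<le> 1" "0 \<le> t" "t \<le> 1" "\<phi> s t \<in> Ob" for s t
    using that unfolding P_def by auto
  have s0r: "0 \<le> s0" "s0 \<le> 1" and t0r: "0 \<le> t0" "t0 \<le> 1" and cO: "\<phi> s0 t0 \<in> Ob"
    using s0t0 unfolding P_def by auto
  define c where "c = \<phi> s0 t0"
  obtain C where C: "C \<in> V" "C \<noteq> u" "C \<noteq> v" "c \<in> R C"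
    using cO unfolding Ob_def c_def by blast
  have s0pos: "s0 > 0"
  proof (rule ccontr)
    assume "\<not> s0 > 0" then have "s0 = 0" using s0r by auto
    then show False using cO notOb_u[OF xA] phi0 by simp
  qed
  have t0pos: "t0 > 0"
  proof (rule ccontr)
    assume "\<not> t0 > 0" then have "t0 = 0" using t0r by auto
    then have "c \<in> closed_segment x y0" using phiseg[OF s0r, of 0] y01 unfolding c_def by simp
    then show False using clear C by blast
  qed
  have sightA: "sightline V R u C x c"
    unfolding sightline_def
  proof (intro conjI ballI impI)
    fix w assume wV: "w \<in> V" and ww: "w \<noteq> u \<and> w \<noteq> C"
    show "closed_segment x c \<inter> R w = {}"
    proof (rule ccontr)
      assume "closed_segment x c \<inter> R w \<noteq> {}"
      then obtain p where p: "p \<in> closed_segment x c" "p \<in> R w" by blast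
      then obtain l where l: "0 \<le> l" "l \<le> 1" "p = (1-l) *\<^sub>R x + l *\<^sub>R c"
        unfolding closed_segment_def by blast
      have pphi: "p = \<phi> (l * s0) t0" unfolding l(3) c_def \<phi>_def by (simp add: algebra_simps)
      have ls: "l * s0 \<le> s0" using l s0r by (simp add: mult_left_le_one_le)
      show False
      proof (cases "w = v")
        case True
        have "\<phi> s0 t0 \<in> closed_segment (\<phi> (l * s0) t0) (\<phi> 1 t0)"
          unfolding \<phi>_def using seg_aff[OF ls s0r(2)] by simp
        then have "c \<in> closed_segment p (y t0)" using pphi phi1 c_def by simp
        moreover have "p \<in> R v" "y t0 \<in> R v" using p True yB t0r by auto
        ultimately have "c \<in> R v" using convex_contains_segment convR[OF vV] by blast
        then show False using C disj vV by blast
      next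
        case False
        show False
        proof (cases "l = 1")
          case True
          then have "p = c" using l by simp
          then show False using p C disj wV ww by blast
        next
          case False
          then have "l * s0 < s0" using l s0pos by simp
          moreover have "p \<in> Ob" using p wV ww \<open>w \<noteq> v\<close> unfolding Ob_def by blast
          then have "(l * s0, t0) \<in> P" using inP[of "l * s0" t0] pphi l s0r t0r ls by auto
          ultimately show False using smin by fastforce
        qed
      qed
    qed
  qed (use uV C xA in auto)
  define S where "S = closed_segment c (y t0)"
  have SA: "S \<inter> R u = {}"
  proof (rule ccontr)
    assume "S \<inter> R u \<noteq> {}"
    then obtain p where p: "p \<in> S" "p \<in> R u" by blast
    then obtain l where l: "0 \<le> l" "l \<le> 1" "p = (1-l) *\<^sub>R c + l *\<^sub>R y t0"
      unfolding S_def closed_segment_def by blast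
    define sg where "sg = (1-l) * s0 + l"
    have pphi: "p = \<phi> sg t0" unfolding l(3) c_def \<phi>_def sg_def by (simp add: algebra_simps)
    have "l * s0 \<le> l" using l s0r by (simp add: mult_right_le_one_le)
    then have sg: "s0 \<le> sg" unfolding sg_def by (simp add: algebra_simps)
    have "\<phi> s0 t0 \<in> closed_segment (\<phi> 0 t0) (\<phi> sg t0)"
      unfolding \<phi>_def using seg_aff[OF s0r(1) sg] by simp
    then have "c \<in> closed_segment x p" using pphi phi0 c_def by simp
    then have "c \<in> R u" using convex_contains_segment convR[OF uV] p xA by blast
    then show False using C disj uV by blast
  qed
  obtain \<delta> where \<delta>: "\<delta> > 0" "\<forall>p\<in>S. \<forall>q\<in>R u. \<delta> \<le> dist p q"
    using separate_compact_closed[of S "R u"] SA cc uV unfolding S_def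
    by (meson compact_imp_closed compact_segment)
  define t1 where "t1 = t0 - min t0 (\<delta> / (norm (y1 - y0) + 1)) / 2"
  have "0 < \<delta> / (norm (y1 - y0) + 1)" using \<delta>(1)
    by (metis divide_pos_pos norm_ge_zero add_nonneg_pos zero_less_one)
  then have t1r: "0 \<le> t1" "t1 < t0" using t0pos unfolding t1_def by (auto simp: min_def)
  have t1d: "(t0 - t1) * norm (y1 - y0) < \<delta>"
  proof -
    have e: "t0 - t1 = min t0 (\<delta> / (norm (y1 - y0) + 1)) / 2" unfolding t1_def by simp
    have "min t0 (\<delta> / (norm (y1 - y0) + 1)) \<le> \<delta> / (norm (y1 - y0) + 1)" by (rule min.cobounded2)
    then have "(t0 - t1) \<le> (\<delta> / (norm (y1 - y0) + 1)) / 2" unfolding e by (rule divide_right_mono) simp_all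
    then have "(t0 - t1) * norm (y1 - y0) \<le> (\<delta> / (norm (y1 - y0) + 1)) / 2 * norm (y1 - y0)"
      by (rule mult_right_mono) simp_all
    also have "\<dots> = (\<delta>/2) * (norm (y1 - y0) / (norm (y1 - y0) + 1))" by simp
    also have "\<dots> \<le> (\<delta>/2) * 1"
      using \<delta>(1) by (intro mult_left_mono) (simp_all add: divide_le_eq_1 add_nonneg_pos)
    also have "\<dots> < \<delta>" using \<delta>(1) by simp
    finally show ?thesis .
  qed
  have sightB: "sightline V R C v c (y t1)"
    unfolding sightline_def
  proof (intro conjI ballI impI)
    fix w assume wV: "w \<in> V" and ww: "w \<noteq> C \<and> w \<noteq> v"
    show "closed_segment c (y t1) \<inter> R w = {}"
    proof (rule ccontr)
      assume "closed_segment c (y t1) \<inter> R w \<noteq> {}"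
      then obtain p where p: "p \<in> closed_segment c (y t1)" "p \<in> R w" by blast
      then obtain l where l: "0 \<le> l" "l \<le> 1" "p = (1-l) *\<^sub>R c + l *\<^sub>R y t1"
        unfolding closed_segment_def by blast
      show False
      proof (cases "w = u")
        case True
        define p' where "p' = (1-l) *\<^sub>R c + l *\<^sub>R y t0"
        have "p' \<in> S" unfolding S_def p'_def closed_segment_def using l by blast
        have "p - p' = (l * (t0 - t1)) *\<^sub>R (y0 - y1)"
          unfolding l(3) p'_def y_def by (simp add: algebra_simps)
        then have "dist p p' = l * (t0 - t1) * norm (y1 - y0)"
          using l t1r by (simp add: dist_norm norm_minus_commute)
        also have "\<dots> \<le> (t0 - t1) * norm (y1 - y0)"
          using l t1r by (simp add: mult_left_le_one_le)
        finally have "dist p' p < \<delta>" using t1d by (simp add: dist_commute)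
        then show False using \<delta>(2) \<open>p' \<in> S\<close> p True by force
      next
        case False
        show False
        proof (cases "l = 0")
          case True
          then have "p = c" using l by simp
          then show False using p C disj wV ww by blast
        next
          case False
          then have lpos: "l > 0" using l by simp
          define s' where "s' = (1-l) * s0 + l"
          define N where "N = (1-l) * s0*t0 + l*t1"
          define t' where "t' = N / s'"
          have a0: "0 \<le> (1-l) * s0" using l s0r by simp
          have s'pos: "s' > 0" using lpos a0 unfolding s'_def by linarith
          have "(1-l) * s0 \<le> (1-l) * 1" using l s0r by (intro mult_left_mono) simp_all
          then have s'le: "s' \<le> 1" unfolding s'_def by simp
          have st: "s' * t' = N" unfolding t'_def using s'pos by simp
          have N0: "0 \<le> N" unfolding N_def using l s0r t0r t1r by simp
          have b1: "(1-l) * s0 * t0 \<le> (1-l) * s0" using a0 t0r by (simp add: mult_right_le_one_le)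
          have b2: "l * t1 \<le> l" using l t1r t0r by (simp add: mult_right_le_one_le)
          have Nle: "N \<le> s'" unfolding N_def s'_def using b1 b2 by linarith
          have b3: "l * t1 < l * t0" using lpos t1r by simp
          have Nlt: "N < s' * t0" unfolding N_def s'_def using b3 by (simp add: algebra_simps)
          have t'r: "0 \<le> t'" "t' \<le> 1" "t' < t0"
            unfolding t'_def using s'pos N0 Nle Nlt by (auto simp: field_simps)
          have "p = (1-s') *\<^sub>R x + (s' - N) *\<^sub>R y0 + N *\<^sub>R y1"
            unfolding l(3) c_def phi_exp y_def s'_def N_def by (simp add: algebra_simps)
          then have pphi: "p = \<phi> s' t'" using phi_exp st by simp
          have "p \<in> Ob" using p wV ww \<open>w \<noteq> u\<close> unfolding Ob_def by blast
          then have "(s',t') \<in> P" using inP[of s' t'] pphi s'pos s'le t'r by auto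
          then show False using tmin t'r by fastforce
        qed
      qed
    qed
  qed (use vV C yB t1r t0r in auto)
  show ?thesis using C sightA sightB unfolding mutually_visible_def by blast
qed

theorem lemma1:
  fixes V :: "'v set" and E :: "'v \<Rightarrow> 'v \<Rightarrow> bool" and R :: "'v \<Rightarrow> (real \<times> real) set"
  assumes "simple_graph V E"
    and "convex_compact_visibility_representation V E R"
    and "u \<in> V" and "v \<in> V" and "u \<noteq> v"
    and "mutually_visible V R u v"
    and "a \<in> R u" and "b \<in> R v"
    and "w \<in> V" and "w \<noteq> u" and "w \<noteq> v"
    and "closed_segment a b \<inter> R w \<noteq> {}"
  shows "\<exists>x\<in>V. x \<noteq> u \<and> x \<noteq> v \<and> E u v \<and> E u x \<and> E v x"
proof -
  have fin: "finite V" using assms(1) unfolding simple_graph_def by simp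
  have disj: "\<forall>p\<in>V. \<forall>q\<in>V. p \<noteq> q \<longrightarrow> R p \<inter> R q = {}"
    and cc: "\<forall>p\<in>V. compact (R p) \<and> convex (R p)"
    and Eiff: "\<forall>p\<in>V. \<forall>q\<in>V. p \<noteq> q \<longrightarrow> (E p q \<longleftrightarrow> mutually_visible V R p q)"
  proof -
    have vr: "visibility_representation V E R" and cc0: "\<forall>p\<in>V. compact (R p) \<and> convex (R p)"
      using assms(2) unfolding convex_compact_visibility_representation_def by simp_all
    note vr' = vr[unfolded visibility_representation_def]
    show "\<forall>p\<in>V. \<forall>q\<in>V. p \<noteq> q \<longrightarrow> R p \<inter> R q = {}" by (rule conjunct1[OF conjunct2[OF vr']])
    show "\<forall>p\<in>V. compact (R p) \<and> convex (R p)" by (rule cc0)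
    show "\<forall>p\<in>V. \<forall>q\<in>V. p \<noteq> q \<longrightarrow> (E p q \<longleftrightarrow> mutually_visible V R p q)"
      by (rule conjunct2[OF conjunct2[OF vr']])
  qed
  have Esym: "E p q \<Longrightarrow> E q p" for p q using assms(1) unfolding simple_graph_def by blast
  obtain a0 b0 where sl: "sightline V R u v a0 b0" using assms(6) unfolding mutually_visible_def by blast
  then have a0: "a0 \<in> R u" and b0: "b0 \<in> R v"
    and clear0: "\<forall>w\<in>V. w \<noteq> u \<and> w \<noteq> v \<longrightarrow> closed_segment a0 b0 \<inter> R w = {}"
    unfolding sightline_def by auto
  have Euv: "E u v" using Eiff assms(3-6) by blast
  have "\<exists>c\<in>V. c \<noteq> u \<and> c \<noteq> v \<and> E u c \<and> E v c"
  proof (cases "\<exists>w'\<in>V. w' \<noteq> u \<and> w' \<noteq> v \<and> closed_segment a0 b \<inter> R w' \<noteq> {}")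
    case True
    then obtain w' where w': "w' \<in> V" "w' \<noteq> u" "w' \<noteq> v" "closed_segment a0 b \<inter> R w' \<noteq> {}" by blast
    from core[OF fin disj cc assms(3,4,5) a0 b0 assms(8) clear0 w']
    obtain c where c: "c \<in> V" "c \<noteq> u" "c \<noteq> v" "mutually_visible V R u c" "mutually_visible V R c v"
      by blast
    then have "E u c" "E c v" using Eiff assms(3,4) by auto
    then show ?thesis using c Esym by blast
  next
    case False
    then have clear1: "\<forall>w'\<in>V. w' \<noteq> v \<and> w' \<noteq> u \<longrightarrow> closed_segment b a0 \<inter> R w' = {}"
      by (auto simp: closed_segment_commute)
    have hit: "closed_segment b a \<inter> R w \<noteq> {}" using assms(12) by (simp add: closed_segment_commute)
    from core[OF fin disj cc assms(4,3) assms(5)[symmetric] assms(8) a0 assms(7) clear1 assms(9,11,10) hit]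
    obtain c where c: "c \<in> V" "c \<noteq> v" "c \<noteq> u" "mutually_visible V R v c" "mutually_visible V R c u"
      by blast
    then have "E v c" "E c u" using Eiff assms(3,4) by auto
    then show ?thesis using c Esym by blast
  qed
  then show ?thesis using Euv by blast
qed

end
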